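(* Let $G$ be a finite group generated by reflections of a real Euclidean space $V$ with root system $R$. For any special involution $\sigma\in G$, the centraliser $C(\sigma)=\{g\in G:g\sigma=\sigma g\}$ coincides with the product $G_1\times G_2$ of the corresponding Coxeter subgroups.
   Context: For an involution $\sigma\in G$ (including the identity), let $V_1=\{v:\sigma v=-v\}$ and $V_2=\{v:\sigma v=v\}$, $R_i=R\cap V_i$, and $G_i$ the subgroup of $G$ generated by the reflections in the roots of $R_i$ ($i=1,2$); $G_1$ and $G_2$ commute and intersect trivially, so $G_1G_2\cong G_1\times G_2$. The involution $\sigma$ is called special if for every root $a\in R$ at least one of the orthogonal projections of $a$ onto $V_1$ and onto $V_2$ is proportional to a root from $R_1$ or $R_2$. *)

theory Defs
  imports "HOL-Analysis.Analysis"
begin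

definition refl :: "'a::euclidean_space \<Rightarrow> 'a \<Rightarrow> 'a" where
  "refl a v = v - (2 * (v \<bullet> a) / (a \<bullet> a)) *\<^sub>R a"

text \<open>Group generated by a set S of involutive linear maps: smallest set containing
  the identity and closed under left composition with generators (since every generator
  is its own inverse this is the generated group).\<close>
inductive_set gen_group :: "('a \<Rightarrow> 'a) set \<Rightarrow> ('a \<Rightarrow> 'a) set" for S where
  gen_id: "id \<in> gen_group S"
| gen_step: "s \<in> S \<Longrightarrow> g \<in> gen_group S \<Longrightarrow> s \<circ> g \<in> gen_group S"

definition root_system :: "'a::euclidean_space set \<Rightarrow> bool" where
  "root_system R \<longleftrightarrow> finite R \<and> 0 \<notin> R \<and> (\<forall>a\<in>R. refl a ` R = R)"

definition refl_group :: "'a::euclidean_space set \<Rightarrow> ('a \<Rightarrow> 'a) set" where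
  "refl_group R = gen_group (refl ` R)"

definition orth_proj :: "'a::euclidean_space set \<Rightarrow> 'a \<Rightarrow> 'a" where
  "orth_proj U a = (THE u. u \<in> U \<and> (\<forall>w\<in>U. (a - u) \<bullet> w = 0))"

definition minus_space :: "('a::euclidean_space \<Rightarrow> 'a) \<Rightarrow> 'a set" where
  "minus_space \<sigma> = {v. \<sigma> v = - v}"

definition plus_space :: "('a::euclidean_space \<Rightarrow> 'a) \<Rightarrow> 'a set" where
  "plus_space \<sigma> = {v. \<sigma> v = v}"

definition proportional_to_root :: "'a::euclidean_space set \<Rightarrow> 'a \<Rightarrow> bool" where
  "proportional_to_root S v \<longleftrightarrow> (\<exists>b\<in>S. \<exists>c::real. v = c *\<^sub>R b)"

definition special_involution :: "'a::euclidean_space set \<Rightarrow> ('a \<Rightarrow> 'a) \<Rightarrow> bool" where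
  "special_involution R \<sigma> \<longleftrightarrow>
     \<sigma> \<in> refl_group R \<and> \<sigma> \<circ> \<sigma> = id \<and>
     (\<forall>a\<in>R.
        proportional_to_root (R \<inter> minus_space \<sigma> \<union> R \<inter> plus_space \<sigma>)
          (orth_proj (minus_space \<sigma>) a) \<or>
        proportional_to_root (R \<inter> minus_space \<sigma> \<union> R \<inter> plus_space \<sigma>)
          (orth_proj (plus_space \<sigma>) a))"

definition centraliser :: "('a \<Rightarrow> 'a) set \<Rightarrow> ('a \<Rightarrow> 'a) \<Rightarrow> ('a \<Rightarrow> 'a) set" where
  "centraliser G \<sigma> = {g \<in> G. g \<circ> \<sigma> = \<sigma> \<circ> g}"

definition set_prod :: "('a \<Rightarrow> 'a) set \<Rightarrow> ('a \<Rightarrow> 'a) set \<Rightarrow> ('a \<Rightarrow> 'a) set" where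
  "set_prod A B = {g1 \<circ> g2 | g1 g2. g1 \<in> A \<and> g2 \<in> B}"

end

theory Submission
  imports Defs
begin


lemma refl_apply: "refl a v = v - (2 * (v \<bullet> a) / (a \<bullet> a)) *\<^sub>R a"
  by (simp add: Defs.refl_def)

lemma refl_add: "refl a (x + y) = refl a x + refl a y"
  by (simp add: refl_apply inner_add_left add_divide_distrib scaleR_add_left algebra_simps)

lemma refl_scale: "refl a (c *\<^sub>R x) = c *\<^sub>R refl a x"
  by (simp add: refl_apply algebra_simps)

lemma refl_linear: "linear (refl a)"
  by (rule linearI) (simp_all add: refl_add refl_scale)

lemma refl_inner: "refl a x \<bullet> refl a y = x \<bullet> y"
proof (cases "a = 0")
  case True then show ?thesis by (simp add: refl_apply)
next
  case False
  then have aa: "a \<bullet> a \<noteq> 0" by simp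
  show ?thesis using aa
    by (simp add: refl_apply inner_diff_left inner_diff_right field_simps inner_commute)
qed

lemma refl_refl: "refl a (refl a x) = x"
proof (cases "a = 0")
  case True then show ?thesis by (simp add: refl_apply)
next
  case False
  then have aa: "a \<bullet> a \<noteq> 0" by simp
  show ?thesis using aa
    by (simp add: refl_apply inner_diff_left field_simps algebra_simps)
qed

lemma refl_comp_self: "refl a \<circ> refl a = id"
  by (simp add: fun_eq_iff refl_refl)

lemma refl_self: "a \<noteq> 0 \<Longrightarrow> refl a a = - a"
  by (simp add: refl_apply algebra_simps scaleR_2)

lemma refl_orth: "x \<bullet> a = 0 \<Longrightarrow> refl a x = x"
  by (simp add: refl_apply)

lemma refl_scaleR_root: "c \<noteq> 0 \<Longrightarrow> refl (c *\<^sub>R a) = refl a"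
  by (rule ext) (simp add: refl_apply field_simps)

lemma refl_selfadj: "refl a x \<bullet> y = x \<bullet> refl a y"
  by (simp add: refl_apply inner_diff_left inner_diff_right inner_commute)

definition orthm :: "('a::euclidean_space \<Rightarrow> 'a) \<Rightarrow> bool" where
  "orthm u \<longleftrightarrow> linear u \<and> (\<forall>x y. u x \<bullet> u y = x \<bullet> y)"

lemma orthm_refl: "orthm (refl a)"
  by (simp add: orthm_def refl_linear refl_inner)

lemma orthm_id: "orthm id"
  by (simp add: orthm_def linear_id)

lemma orthm_comp: "orthm u \<Longrightarrow> orthm v \<Longrightarrow> orthm (u \<circ> v)"
  by (simp add: orthm_def linear_compose)

lemma orthm_inj: assumes "orthm u" shows "inj u"
proof (rule injI)
  fix x y assume "u x = u y"
  then have "u (x - y) = 0" using assms by (simp add: orthm_def linear_diff)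
  then have "(x - y) \<bullet> (x - y) = 0" using assms unfolding orthm_def by (metis inner_zero_left)
  then show "x = y" by simp
qed

lemma refl_conj:
  assumes "orthm u"
  shows "u (refl r x) = refl (u r) (u x)"
proof -
  have l: "linear u" and i: "\<And>x y. u x \<bullet> u y = x \<bullet> y" using assms by (auto simp: orthm_def)
  show ?thesis by (simp add: refl_apply linear_diff[OF l] linear_scale[OF l] i)
qed

lemma gen_comp: "g \<in> gen_group S \<Longrightarrow> h \<in> gen_group S \<Longrightarrow> g \<circ> h \<in> gen_group S"
  by (induction g rule: gen_group.induct) (auto simp: comp_assoc intro: gen_group.intros)

lemma gen_gen: "s \<in> S \<Longrightarrow> s \<in> gen_group S"
  using gen_group.gen_step[OF _ gen_group.gen_id, of s S] by simp

lemma gen_mono: assumes "S \<subseteq> T" "g \<in> gen_group S" shows "g \<in> gen_group T"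
  using assms(2) proof (induction g rule: gen_group.induct)
  case gen_id then show ?case by (rule gen_group.gen_id)
next
  case (gen_step s g) then show ?case using assms(1) by (blast intro: gen_group.gen_step)
qed

lemma gen_induct_prop:
  assumes "g \<in> gen_group S" "P id" "\<And>s h. s \<in> S \<Longrightarrow> P h \<Longrightarrow> P (s \<circ> h)"
  shows "P g"
  using assms(1) proof (induction g rule: gen_group.induct)
  case gen_id then show ?case by (rule assms(2))
next
  case (gen_step s g) then show ?case using assms(3) by blast
qed

lemma gen_inv:
  assumes "g \<in> gen_group S" "\<And>s. s \<in> S \<Longrightarrow> s \<circ> s = id"
  shows "\<exists>g'\<in>gen_group S. g' \<circ> g = id"
  using assms(1)
proof (induction g rule: gen_group.induct)
  case gen_id then show ?case using gen_group.gen_id[of S] by (metis comp_id)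
next
  case (gen_step s g)
  then obtain g' where g': "g' \<in> gen_group S" "g' \<circ> g = id" by blast
  have "g' \<circ> s \<in> gen_group S" using g' gen_step by (auto intro: gen_comp gen_gen)
  moreover have "(g' \<circ> s) \<circ> (s \<circ> g) = id"
    using g' assms(2)[OF gen_step(1)] by (metis comp_assoc comp_id)
  ultimately show ?case by blast
qed

lemma refl_group_orthm: "g \<in> refl_group R \<Longrightarrow> orthm g"
  unfolding refl_group_def
  apply (erule gen_induct_prop)
   apply (rule orthm_id)
  apply (erule imageE)
  apply (simp only: )
  apply (rule orthm_comp[OF orthm_refl])
  apply assumption
  done

lemma root_neg: "root_system R \<Longrightarrow> a \<in> R \<Longrightarrow> - a \<in> R"
  unfolding root_system_def by (metis imageI refl_self)

lemma refl_group_perm: "root_system R \<Longrightarrow> g \<in> refl_group R \<Longrightarrow> g ` R = R"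
  unfolding refl_group_def
  apply (erule gen_induct_prop)
   apply simp
  apply (erule imageE)
  apply (simp only: image_comp[symmetric])
  apply (simp add: root_system_def)
  done

lemma refl_group_mono: "S \<subseteq> T \<Longrightarrow> g \<in> refl_group S \<Longrightarrow> g \<in> refl_group T"
  unfolding refl_group_def by (rule gen_mono) auto

lemma refl_group_inv: "g \<in> refl_group R \<Longrightarrow> \<exists>g'\<in>refl_group R. g' \<circ> g = id"
  unfolding refl_group_def by (rule gen_inv) (auto simp: refl_comp_self)

lemma refl_group_comp: "g \<in> refl_group R \<Longrightarrow> h \<in> refl_group R \<Longrightarrow> g \<circ> h \<in> refl_group R"
  unfolding refl_group_def by (rule gen_comp)

lemma refl_in_group: "a \<in> R \<Longrightarrow> refl a \<in> refl_group R"
  unfolding refl_group_def by (rule gen_gen) auto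

lemma regular_image:
  assumes "root_system R" "g \<in> refl_group R" "\<forall>a\<in>R. a \<bullet> z \<noteq> 0" "a \<in> R"
  shows "a \<bullet> g z \<noteq> 0"
proof -
  from refl_group_perm[OF assms(1,2)] assms(4) obtain r where "r \<in> R" "a = g r" by blast
  then show ?thesis using refl_group_orthm[OF assms(2)] assms(3) by (auto simp: orthm_def)
qed




definition posr :: "'a::euclidean_space set \<Rightarrow> 'a \<Rightarrow> 'a set" where
  "posr R z = {a\<in>R. a \<bullet> z > 0}"

definition nrm :: "'a::euclidean_space \<Rightarrow> 'a \<Rightarrow> 'a" where
  "nrm z a = (1 / (a \<bullet> z)) *\<^sub>R a"

definition simp_roots :: "'a::euclidean_space set \<Rightarrow> 'a \<Rightarrow> 'a set" where
  "simp_roots R z = {x. x extreme_point_of convex hull (nrm z ` posr R z)}"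

context
  fixes R :: "'a::euclidean_space set" and z :: 'a
  assumes rs: "root_system R" and reg: "\<forall>a\<in>R. a \<bullet> z \<noteq> 0"
begin

lemma finR: "finite R" using rs by (simp add: root_system_def)

lemma fin_simp: "finite (simp_roots R z)"
proof -
  have "simp_roots R z \<subseteq> nrm z ` posr R z"
    unfolding simp_roots_def using extreme_point_of_convex_hull by blast
  moreover have "finite (nrm z ` posr R z)" using finR by (simp add: posr_def)
  ultimately show ?thesis by (rule finite_subset)
qed

lemma simp_root_info:
  assumes "e \<in> simp_roots R z"
  obtains a0 where "a0 \<in> R" "a0 \<bullet> z > 0" "e = nrm z a0" "e \<bullet> z = 1" "refl e = refl a0"
    "refl e \<in> refl ` R"
proof -
  have "e \<in> nrm z ` posr R z"
    using assms unfolding simp_roots_def using extreme_point_of_convex_hull by blast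
  then obtain a0 where a0: "a0 \<in> R" "a0 \<bullet> z > 0" "e = nrm z a0" by (auto simp: posr_def)
  then have "e \<bullet> z = 1" by (simp add: nrm_def)
  moreover have "refl e = refl a0" using a0 by (simp add: nrm_def refl_scaleR_root)
  ultimately show ?thesis using that a0 by blast
qed

lemma refl_root: "a \<in> R \<Longrightarrow> b \<in> R \<Longrightarrow> refl a b \<in> R"
  using rs unfolding root_system_def by blast

lemma simple_prop:
  assumes e: "e \<in> simp_roots R z" and a: "a \<in> posr R z" and np: "\<forall>c. a \<noteq> c *\<^sub>R e"
  shows "refl e a \<in> posr R z"
proof (rule ccontr)
  assume nin: "refl e a \<notin> posr R z"
  obtain a0 where a0: "a0 \<in> R" "a0 \<bullet> z > 0" "e = nrm z a0" "e \<bullet> z = 1" "refl e = refl a0"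
    using simp_root_info[OF e] by blast
  have aR: "a \<in> R" and az: "a \<bullet> z > 0" using a by (auto simp: posr_def)
  have raR: "refl e a \<in> R" using a0 aR refl_root by simp
  then have "refl e a \<bullet> z \<noteq> 0" using reg by blast
  with nin raR have neg: "refl e a \<bullet> z < 0" by (auto simp: posr_def)
  define c where "c = 2 * (a \<bullet> e) / (e \<bullet> e)"
  have ra: "refl e a = a - c *\<^sub>R e" by (simp add: refl_apply c_def)
  have "refl e a \<bullet> z = a \<bullet> z - c" using a0(4) by (simp add: ra inner_diff_left)
  with neg az have cpos: "c > a \<bullet> z" by simp
  define b where "b = c *\<^sub>R e - a"
  have bR: "b \<in> R" using root_neg[OF rs raR] by (simp add: b_def ra)
  have bz: "b \<bullet> z = c - a \<bullet> z" using a0(4) by (simp add: b_def inner_diff_left)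
  with cpos have bzp: "b \<bullet> z > 0" by simp
  have cp: "c > 0" using cpos az by simp
  let ?S = "nrm z ` posr R z"
  have na: "nrm z a \<in> convex hull ?S" using a by (meson hull_subset image_eqI subsetD)
  have nb: "nrm z b \<in> convex hull ?S" using bR bzp
    by (metis (mono_tags, lifting) hull_subset image_eqI mem_Collect_eq posr_def subsetD)
  define u where "u = (b \<bullet> z) / c"
  have u01: "0 \<le> u" "u \<le> 1" using bzp cp bz az by (auto simp: u_def field_simps)
  have "e = (1 - u) *\<^sub>R nrm z a + u *\<^sub>R nrm z b"
  proof -
    have "1 - u = (a \<bullet> z) / c" using bz cp by (simp add: u_def field_simps)
    then have "(1 - u) *\<^sub>R nrm z a + u *\<^sub>R nrm z b = (1/c) *\<^sub>R (a + b)"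
      using az bzp cp by (simp add: nrm_def u_def scaleR_add_right)
    also have "\<dots> = e" using cp by (simp add: b_def)
    finally show ?thesis by simp
  qed
  then have cs: "e \<in> closed_segment (nrm z a) (nrm z b)" using u01 by (auto simp: in_segment)
  have ne1: "e \<noteq> nrm z a"
  proof
    assume "e = nrm z a"
    then have "a = (a \<bullet> z) *\<^sub>R e" using az by (simp add: nrm_def)
    with np show False by blast
  qed
  have ne2: "e \<noteq> nrm z b"
  proof
    assume "e = nrm z b"
    then have "b = (b \<bullet> z) *\<^sub>R e" using bzp by (simp add: nrm_def)
    then have "a = (c - b \<bullet> z) *\<^sub>R e" by (metis b_def scaleR_left_diff_distrib add_diff_cancel_left' diff_add_cancel)
    with np show False by blast
  qed
  have "e \<in> open_segment (nrm z a) (nrm z b)" using cs ne1 ne2 by (simp add: open_segment_def)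
  moreover have "e extreme_point_of convex hull ?S" using e by (simp add: simp_roots_def)
  ultimately show False using na nb by (simp add: extreme_point_of_def)
qed

lemma exists_pos_simple:
  assumes a: "a \<in> posr R z"
  shows "\<exists>e\<in>simp_roots R z. a \<bullet> e > 0"
proof (rule ccontr)
  assume "\<not> ?thesis"
  then have le: "\<And>e. e \<in> simp_roots R z \<Longrightarrow> a \<bullet> e \<le> 0" by force
  let ?S = "nrm z ` posr R z"
  have finS: "finite ?S" using finR by (simp add: posr_def)
  have "nrm z a \<in> convex hull ?S" using a by (meson hull_subset image_eqI subsetD)
  then have "nrm z a \<in> convex hull (simp_roots R z)"
    using Krein_Milman_polytope[OF finS] by (simp add: simp_roots_def)
  then obtain u where u: "\<forall>x\<in>simp_roots R z. 0 \<le> u x"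
    "(\<Sum>x\<in>simp_roots R z. u x *\<^sub>R x) = nrm z a"
    using convex_hull_finite[OF fin_simp] by blast
  have az: "a \<bullet> z > 0" and aR: "a \<in> R" using a by (auto simp: posr_def)
  have "a \<noteq> 0" using az by auto
  then have "a \<bullet> nrm z a > 0" using az by (simp add: nrm_def)
  also have "a \<bullet> nrm z a = (\<Sum>x\<in>simp_roots R z. u x * (a \<bullet> x))"
    by (simp add: u(2)[symmetric] inner_sum_right)
  also have "\<dots> \<le> 0"
    by (rule sum_nonpos) (simp add: le u(1) mult_nonneg_nonpos)
  finally show False by simp
qed

abbreviation "Hs \<equiv> gen_group (refl ` simp_roots R z)"

lemma refl_simple_in: "e \<in> simp_roots R z \<Longrightarrow> refl e \<in> Hs"
  by (rule gen_gen) auto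

lemma refl_pos_in_H:
  shows "a \<in> posr R z \<Longrightarrow> refl a \<in> Hs"
proof (induction "card {b \<in> posr R z. b \<bullet> z < a \<bullet> z}" arbitrary: a rule: less_induct)
  case less
  obtain e where e: "e \<in> simp_roots R z" "a \<bullet> e > 0" using exists_pos_simple[OF less.prems] by blast
  obtain a0 where a0: "a0 \<in> R" "a0 \<bullet> z > 0" "e = nrm z a0" "e \<bullet> z = 1" "refl e = refl a0"
    using simp_root_info[OF e(1)] by blast
  have az: "a \<bullet> z > 0" and aR: "a \<in> R" using less.prems by (auto simp: posr_def)
  show ?case
  proof (cases "\<exists>c. a = c *\<^sub>R e")
    case True
    then obtain c where c: "a = c *\<^sub>R e" by blast
    then have "c \<noteq> 0" using az by auto
    then have "refl a = refl e" using c by (simp add: refl_scaleR_root)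
    then show ?thesis using refl_simple_in[OF e(1)] by simp
  next
    case False
    define a' where "a' = refl e a"
    have a'P: "a' \<in> posr R z" using simple_prop[OF e(1) less.prems] False by (simp add: a'_def)
    have ee: "e \<bullet> e > 0" using a0(4) by (metis inner_zero_left zero_less_one not_less_iff_gr_or_eq inner_gt_zero_iff)
    have "a' \<bullet> z = a \<bullet> z - 2 * (a \<bullet> e) / (e \<bullet> e)"
      using a0(4) by (simp add: a'_def refl_apply inner_diff_left)
    moreover have "2 * (a \<bullet> e) / (e \<bullet> e) > 0" using e(2) ee by simp
    ultimately have lt: "a' \<bullet> z < a \<bullet> z" by simp
    have sub: "{b \<in> posr R z. b \<bullet> z < a' \<bullet> z} \<subset> {b \<in> posr R z. b \<bullet> z < a \<bullet> z}"
      using lt a'P by auto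
    have "finite {b \<in> posr R z. b \<bullet> z < a \<bullet> z}" using finR by (simp add: posr_def)
    then have "card {b \<in> posr R z. b \<bullet> z < a' \<bullet> z} < card {b \<in> posr R z. b \<bullet> z < a \<bullet> z}"
      using sub by (rule psubset_card_mono)
    then have IH: "refl a' \<in> Hs" using less.hyps a'P by blast
    have conj: "refl a = refl e \<circ> refl a' \<circ> refl e"
    proof (rule ext)
      fix x
      have "refl e (refl a' (refl e x)) = refl (refl e a') (refl e (refl e x))"
        by (rule refl_conj[OF orthm_refl])
      also have "\<dots> = refl a x" by (simp add: a'_def refl_refl)
      finally show "refl a x = (refl e \<circ> refl a' \<circ> refl e) x" by simp
    qed
    show ?thesis unfolding conj
      by (intro gen_comp refl_simple_in e(1) IH)
  qed
qed

lemma G_sub_H: "g \<in> refl_group R \<Longrightarrow> g \<in> Hs"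
  unfolding refl_group_def
proof (erule gen_induct_prop)
  show "id \<in> Hs" by (rule gen_group.gen_id)
next
  fix s h assume s: "s \<in> refl ` R" and h: "h \<in> Hs"
  then obtain a where a: "a \<in> R" "s = refl a" by blast
  have "refl a \<in> Hs"
  proof (cases "a \<bullet> z > 0")
    case True then show ?thesis using a refl_pos_in_H by (simp add: posr_def)
  next
    case False
    then have "- a \<in> posr R z" using reg a root_neg[OF rs] by (force simp: posr_def)
    then have "refl (-a) \<in> Hs" by (rule refl_pos_in_H)
    moreover have "refl (-a) = refl a" using refl_scaleR_root[of "-1" a] by simp
    ultimately show ?thesis by simp
  qed
  then show "s \<circ> h \<in> Hs" using a h by (simp add: gen_comp)
qed

end


context
  fixes R :: "'a::euclidean_space set" and z :: 'a
  assumes rs: "root_system R" and reg: "\<forall>a\<in>R. a \<bullet> z \<noteq> 0"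
begin
definition Wd :: "'a list \<Rightarrow> 'a \<Rightarrow> 'a" where
  "Wd es = foldr (\<lambda>e f. refl e \<circ> f) es id"

lemma Wd_Nil[simp]: "Wd [] = id" by (simp add: Wd_def)
lemma Wd_Cons[simp]: "Wd (e # es) = refl e \<circ> Wd es" by (simp add: Wd_def)
lemma Wd_append: "Wd (xs @ ys) = Wd xs \<circ> Wd ys"
  by (induction xs) (simp_all add: comp_assoc)

lemma H_words: "g \<in> Hs R z \<Longrightarrow> \<exists>es. set es \<subseteq> simp_roots R z \<and> g = Wd es"
proof (erule gen_induct_prop)
  show "\<exists>es. set es \<subseteq> simp_roots R z \<and> id = Wd es" by (rule exI[of _ "[]"]) simp
next
  fix s h assume s: "s \<in> refl ` simp_roots R z" and "\<exists>es. set es \<subseteq> simp_roots R z \<and> h = Wd es"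
  then obtain es e where "set es \<subseteq> simp_roots R z" "h = Wd es" "e \<in> simp_roots R z" "s = refl e" by blast
  then show "\<exists>es. set es \<subseteq> simp_roots R z \<and> s \<circ> h = Wd es"
    by (intro exI[of _ "e # es"]) simp
qed

lemma Wd_in_G: "set es \<subseteq> simp_roots R z \<Longrightarrow> Wd es \<in> refl_group R"
proof (induction es)
  case Nil show ?case unfolding Wd_Nil refl_group_def by (rule gen_group.gen_id)
next
  case (Cons e es)
  obtain a0 where "a0 \<in> R" "refl e = refl a0" using simp_root_info[OF rs reg, of e] Cons.prems by auto
  then have "refl e \<in> refl_group R" by (simp add: refl_in_group)
  moreover have "Wd es \<in> refl_group R" using Cons by simp
  ultimately show ?case unfolding Wd_Cons by (rule refl_group_comp)
qed

lemma fold_id: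
  assumes "set es \<subseteq> simp_roots R z" "Wd es z = z"
  shows "Wd es = id"
  using assms
proof (induction "length es" arbitrary: es rule: less_induct)
  case less
  show ?case
  proof (cases es)
    case Nil then show ?thesis by simp
  next
    case (Cons e1 rest)
    have e1: "e1 \<in> simp_roots R z" using less.prems Cons by auto
    obtain a1 where a1: "a1 \<in> R" "a1 \<bullet> z > 0" "e1 = nrm z a1" "e1 \<bullet> z = 1" "refl e1 = refl a1"
      using simp_root_info[OF rs reg e1] by blast
    define q where "q = length es"
    have q1: "q \<ge> 1" using Cons by (simp add: q_def)
    define f where "f j = e1 \<bullet> Wd (take j es) z" for j
    have tG: "Wd (take j es) \<in> refl_group R" for j
      using less.prems(1) by (meson Wd_in_G order_trans set_take_subset)
    have fdef: "f j = (1 / (a1 \<bullet> z)) * (a1 \<bullet> Wd (take j es) z)" for j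
      by (simp add: f_def a1(3) nrm_def)
    have nz: "f j \<noteq> 0" for j
      using regular_image[OF rs tG reg a1(1)] a1(2) by (simp add: fdef)
    have e1nz: "e1 \<noteq> 0" using a1(4) by auto
    have f1: "f 1 < 0"
    proof -
      have "f 1 = e1 \<bullet> refl e1 z" using Cons by (simp add: f_def)
      also have "\<dots> = refl e1 e1 \<bullet> z" by (simp add: refl_selfadj)
      also have "\<dots> = -1" using e1nz a1(4) by (simp add: refl_self)
      finally show ?thesis by simp
    qed
    have fq: "0 < f q" using less.prems(2) a1(4) by (simp add: f_def q_def)
    define j where "j = (LEAST j. 1 \<le> j \<and> 0 < f j)"
    have jP: "1 \<le> j \<and> 0 < f j" unfolding j_def by (rule LeastI[of _ q]) (use q1 fq in simp)
    have jq: "j \<le> q" unfolding j_def by (rule Least_le) (use q1 fq in simp)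
    have j2: "j \<ge> 2" using jP f1 by (cases "j = 1") auto
    define m where "m = j - 1"
    have fm: "f m < 0"
    proof -
      have "m < j" using j2 by (simp add: m_def)
      then have "\<not> (1 \<le> m \<and> 0 < f m)" unfolding j_def by (rule not_less_Least)
      then have "f m \<le> 0" using j2 by (auto simp: m_def)
      with nz show ?thesis by (meson le_less)
    qed
    have mq: "m < length es" using jq j2 by (simp add: m_def q_def)
    have jm: "j = Suc m" using j2 by (simp add: m_def)
    define u where "u = Wd (take m es)"
    define al where "al = es ! m"
    have al: "al \<in> simp_roots R z" using less.prems(1) mq by (simp add: al_def subset_iff)
    have tj: "Wd (take j es) = u \<circ> refl al"
      using mq by (simp add: jm take_Suc_conv_app_nth Wd_append u_def al_def)
    have uG: "u \<in> refl_group R" by (simp add: u_def tG)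
    have uo: "orthm u" by (rule refl_group_orthm[OF uG])
    have "a1 \<in> u ` R" using refl_group_perm[OF rs uG] a1(1) by simp
    then obtain r where r: "r \<in> R" "u r = a1" by (auto simp del: image_iff elim!: imageE)
    have uinner: "u x \<bullet> u y = x \<bullet> y" for x y using uo by (simp add: orthm_def)
    have "a1 \<bullet> Wd (take m es) z = r \<bullet> z"
      by (metis r(2) u_def uinner)
    then have "f m = (1 / (a1 \<bullet> z)) * (r \<bullet> z)" using fdef[of m] by simp
    with fm a1(2) have rz: "r \<bullet> z < 0" by (simp add: divide_less_0_iff)
    have "a1 \<bullet> Wd (take j es) z = refl al r \<bullet> z"
      by (metis r(2) tj uinner o_apply refl_selfadj)
    then have "f j = (1 / (a1 \<bullet> z)) * (refl al r \<bullet> z)"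
      using fdef[of j] by simp
    with jP a1(2) have rz2: "refl al r \<bullet> z > 0" by (simp add: zero_less_divide_iff)
    have pP: "- r \<in> posr R z" using rz root_neg[OF rs r(1)] by (simp add: posr_def)
    have "refl al (- r) = - refl al r" using refl_scale[of al "-1" r] by simp
    then have "refl al (- r) \<notin> posr R z" using rz2 by (simp add: posr_def)
    then obtain c where c: "- r = c *\<^sub>R al" using simple_prop[OF rs reg al pP] by blast
    have "r = (- c) *\<^sub>R al" using c by (metis minus_minus scaleR_minus_left)
    moreover have "c \<noteq> 0" using c rz by auto
    ultimately have rr: "refl r = refl al" using refl_scaleR_root[of "- c" al] by simp
    have conj: "refl e1 \<circ> u = u \<circ> refl al"
    proof (rule ext)
      fix x
      have "u (refl r x) = refl (u r) (u x)" by (rule refl_conj[OF uo])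
      then show "(refl e1 \<circ> u) x = (u \<circ> refl al) x" using r(2) a1(5) rr by simp
    qed
    have m1: "m \<ge> 1" using j2 by (simp add: m_def)
    define v where "v = Wd (take (m - 1) rest)"
    have "take m es = e1 # take (m - 1) rest" using m1 Cons by (cases m) auto
    then have uv: "u = refl e1 \<circ> v" by (simp add: u_def v_def)
    have "refl e1 \<circ> u = v" using uv by (simp add: comp_assoc[symmetric] refl_comp_self)
    then have vj: "v = Wd (take j es)" using conj tj by simp
    have "Wd es = Wd (take j es) \<circ> Wd (drop j es)"
      by (metis Wd_append append_take_drop_id)
    also have "\<dots> = Wd (take (m - 1) rest @ drop j es)" unfolding Wd_append using vj v_def by simp
    finally have eq: "Wd es = Wd (take (m - 1) rest @ drop j es)" .
    have len: "length (take (m - 1) rest @ drop j es) < length es"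
      using mq jq j2 Cons by (simp add: m_def q_def)
    have set: "set (take (m - 1) rest @ drop j es) \<subseteq> simp_roots R z"
      using less.prems(1) set_take_subset[of "m - 1" rest] set_drop_subset[of j es] Cons by auto
    have "Wd (take (m - 1) rest @ drop j es) = id"
      using less.hyps[OF len set] less.prems(2) eq by simp
    then show ?thesis using eq by simp
  qed
qed

lemma key_lemma: "g \<in> refl_group R \<Longrightarrow> g z = z \<Longrightarrow> g = id"
  using G_sub_H[OF rs reg] H_words fold_id by metis

end



lemma regular_exists:
  fixes B :: "'a::euclidean_space set"
  assumes "finite B" "0 \<notin> B"
  shows "\<exists>x. \<forall>b\<in>B. b \<bullet> x \<noteq> 0"
  using assms
proof (induction B rule: finite_induct)
  case empty then show ?case by simp
next
  case (insert c B)
  then obtain x where x: "\<forall>b\<in>B. b \<bullet> x \<noteq> 0" by auto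
  have c0: "c \<noteq> 0" using insert.prems by auto
  show ?case
  proof (cases "c \<bullet> x = 0")
    case False then show ?thesis using x by auto
  next
    case True
    define F where "F = insert 0 ((\<lambda>b. - (b \<bullet> x) / (b \<bullet> c)) ` B)"
    have "finite F" using insert.hyps(1) by (simp add: F_def)
    then obtain t :: real where t: "t \<notin> F" using ex_new_if_finite[OF infinite_UNIV_char_0] by blast
    have "\<forall>b\<in>insert c B. b \<bullet> (x + t *\<^sub>R c) \<noteq> 0"
    proof
      fix b assume b: "b \<in> insert c B"
      show "b \<bullet> (x + t *\<^sub>R c) \<noteq> 0"
      proof (cases "b = c")
        case True then show ?thesis using \<open>c \<bullet> x = 0\<close> t c0 by (simp add: F_def inner_add_right)
      next
        case False
        then have bB: "b \<in> B" using b by simp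
        show ?thesis
        proof
          assume h: "b \<bullet> (x + t *\<^sub>R c) = 0"
          then have h2: "b \<bullet> x + t * (b \<bullet> c) = 0" by (simp add: inner_add_right)
          show False
          proof (cases "b \<bullet> c = 0")
            case True then show False using h2 x bB by simp
          next
            case False
            then have "t = - (b \<bullet> x) / (b \<bullet> c)" using h2 by (simp add: field_simps)
            then show False using t bB by (simp add: F_def)
          qed
        qed
      qed
    qed
    then show ?thesis by blast
  qed
qed

lemma finite_order:
  assumes "finite G" "id \<in> G" "\<And>h. h \<in> G \<Longrightarrow> k \<circ> h \<in> G" "inj k"
  shows "\<exists>N>0. k ^^ N = id"
proof -
  have inG: "k ^^ n \<in> G" for n
  proof (induction n)
    case 0 show ?case using assms(2) by (simp only: funpow.simps(1))
  next
    case (Suc n) then show ?case using assms(3) by (simp only: funpow.simps(2))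
  qed
  have "\<not> inj (\<lambda>n::nat. k ^^ n)"
  proof
    assume "inj (\<lambda>n::nat. k ^^ n)"
    then have "infinite (range (\<lambda>n::nat. k ^^ n))" using finite_imageD infinite_UNIV_nat by blast
    moreover have "range (\<lambda>n::nat. k ^^ n) \<subseteq> G" using inG by auto
    ultimately show False using assms(1) finite_subset by blast
  qed
  then obtain i j where ij: "i \<noteq> j" "k ^^ i = k ^^ j" unfolding inj_def by blast
  have main: "k ^^ i = k ^^ j \<Longrightarrow> i < j \<Longrightarrow> \<exists>N>0. k ^^ N = id" for i j
  proof -
    assume e: "k ^^ i = k ^^ j" and lt: "i < j"
    have injk: "inj (k ^^ i)" using assms(4) by (rule inj_fn)
    have "k ^^ j = k ^^ i \<circ> k ^^ (j - i)" using lt by (simp add: funpow_add[symmetric])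
    then have "k ^^ i \<circ> k ^^ (j - i) = k ^^ i \<circ> id" using e by simp
    then have "k ^^ (j - i) = id"
      using injk by (auto simp: fun_eq_iff inj_def)
    then show ?thesis using lt by (intro exI[of _ "j - i"]) simp
  qed
  show ?thesis
  proof (cases "i < j")
    case True then show ?thesis using main ij by blast
  next
    case False then have "j < i" using ij by simp
    then show ?thesis using main ij by metis
  qed
qed

lemma sum_fixed:
  assumes "linear k" "k ^^ N = id"
  shows "k (\<Sum>n<N. (k ^^ n) x) = (\<Sum>n<N. (k ^^ n) x)"
proof -
  have "k (\<Sum>n<N. (k ^^ n) x) = (\<Sum>n<N. (k ^^ Suc n) x)"
    by (simp add: linear_sum[OF assms(1)])
  also have "\<dots> = (\<Sum>n<N. (k ^^ n) x)"
  proof -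
    have "(\<Sum>n<Suc N. (k ^^ n) x) = (k ^^ 0) x + (\<Sum>n<N. (k ^^ Suc n) x)"
      by (rule sum.lessThan_Suc_shift)
    moreover have "(\<Sum>n<Suc N. (k ^^ n) x) = (\<Sum>n<N. (k ^^ n) x) + (k ^^ N) x"
      by simp
    ultimately show ?thesis using assms(2) by simp
  qed
  finally show ?thesis .
qed

lemma sign_pow:
  assumes o: "orthm k" and perm: "\<forall>b\<in>B. \<exists>b'\<in>B. k b' = b"
    and nz: "\<forall>b\<in>B. b \<bullet> x \<noteq> 0" and ws: "\<forall>b\<in>B. (b \<bullet> k x) * (b \<bullet> x) \<ge> 0"
  shows "\<forall>b\<in>B. (b \<bullet> (k ^^ n) x) * (b \<bullet> x) > 0"
proof (induction n)
  case 0 then show ?case using nz by (simp add: zero_less_mult_iff) (metis less_linear)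
next
  case (Suc n)
  show ?case
  proof
    fix b assume b: "b \<in> B"
    then obtain b' where b': "b' \<in> B" "k b' = b" using perm by blast
    have inner: "k u \<bullet> k v = u \<bullet> v" for u v using o by (simp add: orthm_def)
    define p where "p = b' \<bullet> (k ^^ n) x"
    define q where "q = b' \<bullet> x"
    define r where "r = b \<bullet> x"
    have pq: "p * q > 0" using Suc b' by (simp add: p_def q_def)
    have q0: "q \<noteq> 0" using nz b' by (simp add: q_def)
    have r0: "r \<noteq> 0" using nz b by (simp add: r_def)
    have "b \<bullet> k x = q" unfolding q_def using inner b'(2) by metis
    then have "q * r \<ge> 0" using ws b unfolding r_def by metis
    then have qr: "q * r > 0" using q0 r0 by (simp add: less_le)
    have "(p * r) * (q * q) > 0" using mult_pos_pos[OF pq qr] by (simp add: algebra_simps)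
    moreover have "q * q > 0" using q0 not_real_square_gt_zero by blast
    ultimately have "p * r > 0" by (simp add: zero_less_mult_iff)
    moreover have "b \<bullet> (k ^^ Suc n) x = p" unfolding p_def using inner b'(2) by (metis funpow.simps(2) o_apply)
    ultimately show "(b \<bullet> (k ^^ Suc n) x) * (b \<bullet> x) > 0" by (simp add: r_def)
  qed
qed

lemma sum_sign:
  assumes "N > 0" "\<forall>n. (b \<bullet> (k ^^ n) x) * (b \<bullet> x) > 0"
  shows "b \<bullet> (\<Sum>n<N. (k ^^ n) x) \<noteq> 0"
proof -
  have "(b \<bullet> (\<Sum>n<N. (k ^^ n) x)) * (b \<bullet> x) = (\<Sum>n<N. (b \<bullet> (k ^^ n) x) * (b \<bullet> x))"
    by (simp add: inner_sum_right sum_distrib_right)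
  also have "\<dots> > 0" using assms by (intro sum_pos) auto
  finally show ?thesis by auto
qed

lemma max_sign:
  assumes "(refl b u) \<bullet> x \<le> u \<bullet> x" "b \<noteq> 0"
  shows "(b \<bullet> u) * (b \<bullet> x) \<ge> 0"
proof -
  have bb: "b \<bullet> b > 0" using assms(2) by simp
  have "refl b u \<bullet> x = u \<bullet> x - 2 * (u \<bullet> b) / (b \<bullet> b) * (b \<bullet> x)"
    by (simp add: refl_apply inner_diff_left)
  with assms(1) have "2 * (u \<bullet> b) / (b \<bullet> b) * (b \<bullet> x) \<ge> 0" by simp
  then have "(u \<bullet> b) * (b \<bullet> x) \<ge> 0" using bb by (simp add: zero_le_mult_iff zero_le_divide_iff)
  then show ?thesis by (simp add: inner_commute)
qed

lemma orth_proj_eq: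
  fixes U :: "'a::euclidean_space set"
  assumes "p \<in> U" "\<forall>w\<in>U. q \<bullet> w = 0" "a = p + q" "\<forall>x\<in>U. \<forall>y\<in>U. x - y \<in> U"
  shows "orth_proj U a = p"
  unfolding orth_proj_def
proof (rule the_equality)
  show "p \<in> U \<and> (\<forall>w\<in>U. (a - p) \<bullet> w = 0)" using assms by simp
next
  fix u assume u: "u \<in> U \<and> (\<forall>w\<in>U. (a - u) \<bullet> w = 0)"
  have d: "p - u \<in> U" using assms u by blast
  have "(a - u) \<bullet> (p - u) = 0" using u d by blast
  moreover have "(a - p) \<bullet> (p - u) = 0" using assms d by simp
  ultimately have "(p - u) \<bullet> (p - u) = 0"
    by (metis (no_types, lifting) diff_diff_eq2 diff_self inner_diff_left diff_add_cancel
        add_diff_cancel_left' eq_iff_diff_eq_0 minus_diff_eq)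
  then show "u = p" by simp
qed




lemma gen_comm:
  assumes "orthm \<sigma>" "\<forall>b\<in>B. \<sigma> b = - b \<or> \<sigma> b = b" "g \<in> refl_group B"
  shows "g \<circ> \<sigma> = \<sigma> \<circ> g"
  using assms(3) unfolding refl_group_def
proof (rule gen_induct_prop)
  show "id \<circ> \<sigma> = \<sigma> \<circ> id" by simp
next
  fix s h assume s: "s \<in> refl ` B" and h: "h \<circ> \<sigma> = \<sigma> \<circ> h"
  then obtain b where b: "b \<in> B" "s = refl b" by blast
  have "refl (\<sigma> b) = refl b"
    using assms(2) b(1) refl_scaleR_root[of "-1" b] by auto
  then have sc: "\<sigma> \<circ> refl b = refl b \<circ> \<sigma>"
    using refl_conj[OF assms(1), of b] by (auto simp: fun_eq_iff)
  have "s \<circ> h \<circ> \<sigma> = s \<circ> (\<sigma> \<circ> h)" using h by (simp only: comp_assoc)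
  also have "\<dots> = (s \<circ> \<sigma>) \<circ> h" by (simp only: comp_assoc)
  also have "\<dots> = (\<sigma> \<circ> s) \<circ> h" using sc b(2) by simp
  finally show "s \<circ> h \<circ> \<sigma> = \<sigma> \<circ> (s \<circ> h)" by (simp only: comp_assoc)
qed

lemma gen_fix:
  assumes "\<forall>b\<in>B. w \<bullet> b = 0" "g \<in> refl_group B"
  shows "g w = w"
  using assms(2) unfolding refl_group_def
proof (rule gen_induct_prop)
  show "id w = w" by simp
next
  fix s h assume s: "s \<in> refl ` B" and h: "h w = w"
  then obtain b where b: "b \<in> B" "s = refl b" by blast
  show "(s \<circ> h) w = w" using h b assms(1) by (simp add: refl_orth)
qed

lemma perm_sub:
  assumes "k ` R = R" "inj k" "linear k" "k \<circ> \<sigma> = \<sigma> \<circ> k" "b \<in> R" "\<sigma> b = c *\<^sub>R b"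
  shows "\<exists>b'\<in>R. \<sigma> b' = c *\<^sub>R b' \<and> k b' = b"
proof -
  have "b \<in> k ` R" using assms(1,5) by simp
  then obtain b' where b': "b' \<in> R" "k b' = b" by (auto simp del: image_iff elim!: imageE)
  have "k (\<sigma> b') = \<sigma> (k b')" using assms(4) by (metis comp_apply)
  also have "\<dots> = k (c *\<^sub>R b')" using b' assms(6) linear_scale[OF assms(3)] by simp
  finally have "\<sigma> b' = c *\<^sub>R b'" using assms(2) by (metis injD)
  then show ?thesis using b' by blast
qed

lemma fin_max:
  assumes "finite A" "A \<noteq> {}"
  shows "\<exists>x\<in>A. \<forall>y\<in>A. (f y :: real) \<le> f x"
proof -
  have "Max (f ` A) \<in> f ` A" using assms by simp
  then obtain x where x: "x \<in> A" "f x = Max (f ` A)" by (metis imageE)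
  have "\<forall>y\<in>A. f y \<le> f x" using assms x(2) by simp
  then show ?thesis using x(1) by blast
qed

context
  fixes R :: "'a::euclidean_space set" and \<sigma> :: "'a \<Rightarrow> 'a"
  assumes rs: "root_system R" and sG: "\<sigma> \<in> refl_group R" and inv: "\<sigma> \<circ> \<sigma> = id"
begin

lemma so: "orthm \<sigma>" using refl_group_orthm[OF sG] .
lemma slin: "linear \<sigma>" using so by (simp add: orthm_def)
lemma sinner: "\<sigma> x \<bullet> \<sigma> y = x \<bullet> y" using so by (simp add: orthm_def)
lemma ss: "\<sigma> (\<sigma> x) = x" using inv by (metis comp_apply id_apply)

lemma perp: "\<sigma> v = - v \<Longrightarrow> \<sigma> w = w \<Longrightarrow> v \<bullet> w = 0"
  using sinner[of v w] by simp

lemma minus_space_diff: "x \<in> minus_space \<sigma> \<Longrightarrow> y \<in> minus_space \<sigma> \<Longrightarrow> x - y \<in> minus_space \<sigma>"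
  by (simp add: minus_space_def linear_diff[OF slin])
lemma plus_space_diff: "x \<in> plus_space \<sigma> \<Longrightarrow> y \<in> plus_space \<sigma> \<Longrightarrow> x - y \<in> plus_space \<sigma>"
  by (simp add: plus_space_def linear_diff[OF slin])

lemma p1_in: "(1/2) *\<^sub>R (a - \<sigma> a) \<in> minus_space \<sigma>"
  by (simp add: minus_space_def linear_scale[OF slin] linear_diff[OF slin] ss algebra_simps)
lemma p2_in: "(1/2) *\<^sub>R (a + \<sigma> a) \<in> plus_space \<sigma>"
  by (simp add: plus_space_def linear_scale[OF slin] linear_add[OF slin] ss add.commute)
lemma a_split: "a = (1/2) *\<^sub>R (a - \<sigma> a) + (1/2) *\<^sub>R (a + \<sigma> a)"
  by (simp add: algebra_simps scaleR_2[symmetric])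

lemma proj1: "orth_proj (minus_space \<sigma>) a = (1/2) *\<^sub>R (a - \<sigma> a)"
proof (rule orth_proj_eq[OF p1_in _ a_split])
  show "\<forall>w\<in>minus_space \<sigma>. (1/2) *\<^sub>R (a + \<sigma> a) \<bullet> w = 0"
  proof
    fix w assume "w \<in> minus_space \<sigma>"
    then have "w \<bullet> ((1/2) *\<^sub>R (a + \<sigma> a)) = 0"
      using p2_in[of a] perp[of w "(1/2) *\<^sub>R (a + \<sigma> a)"] unfolding minus_space_def plus_space_def by simp
    then show "(1/2) *\<^sub>R (a + \<sigma> a) \<bullet> w = 0" by (simp add: inner_commute)
  qed
  show "\<forall>x\<in>minus_space \<sigma>. \<forall>y\<in>minus_space \<sigma>. x - y \<in> minus_space \<sigma>"
    using minus_space_diff by blast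
qed

lemma proj2: "orth_proj (plus_space \<sigma>) a = (1/2) *\<^sub>R (a + \<sigma> a)"
proof (rule orth_proj_eq[OF p2_in])
  show "\<forall>w\<in>plus_space \<sigma>. (1/2) *\<^sub>R (a - \<sigma> a) \<bullet> w = 0"
  proof
    fix w assume "w \<in> plus_space \<sigma>"
    then show "(1/2) *\<^sub>R (a - \<sigma> a) \<bullet> w = 0"
      using p1_in[of a] perp[of "(1/2) *\<^sub>R (a - \<sigma> a)" w] unfolding minus_space_def plus_space_def by simp
  qed
  show "a = (1/2) *\<^sub>R (a + \<sigma> a) + (1/2) *\<^sub>R (a - \<sigma> a)"
    using a_split[of a] by (simp add: add.commute)
  show "\<forall>x\<in>plus_space \<sigma>. \<forall>y\<in>plus_space \<sigma>. x - y \<in> plus_space \<sigma>"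
    using plus_space_diff by blast
qed

lemma G1_comm: "g \<in> refl_group (R \<inter> minus_space \<sigma>) \<Longrightarrow> g \<circ> \<sigma> = \<sigma> \<circ> g"
  by (rule gen_comm[OF so]) (auto simp: minus_space_def)
lemma G2_comm: "g \<in> refl_group (R \<inter> plus_space \<sigma>) \<Longrightarrow> g \<circ> \<sigma> = \<sigma> \<circ> g"
  by (rule gen_comm[OF so]) (auto simp: plus_space_def)

lemma G1_fix: assumes "g \<in> refl_group (R \<inter> minus_space \<sigma>)" "w \<in> plus_space \<sigma>" shows "g w = w"
proof (rule gen_fix[OF _ assms(1)])
  show "\<forall>b\<in>R \<inter> minus_space \<sigma>. w \<bullet> b = 0"
  proof
    fix b assume "b \<in> R \<inter> minus_space \<sigma>"
    then have "b \<bullet> w = 0" using assms(2) perp[of b w] by (simp add: minus_space_def plus_space_def)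
    then show "w \<bullet> b = 0" by (metis inner_commute)
  qed
qed
lemma G2_fix: assumes "g \<in> refl_group (R \<inter> plus_space \<sigma>)" "w \<in> minus_space \<sigma>" shows "g w = w"
proof (rule gen_fix[OF _ assms(1)])
  show "\<forall>b\<in>R \<inter> plus_space \<sigma>. w \<bullet> b = 0"
    using assms(2) perp unfolding minus_space_def plus_space_def by blast
qed

lemma comm_minus: "linear g \<Longrightarrow> g \<circ> \<sigma> = \<sigma> \<circ> g \<Longrightarrow> v \<in> minus_space \<sigma> \<Longrightarrow> g v \<in> minus_space \<sigma>"
proof -
  assume l: "linear g" and c: "g \<circ> \<sigma> = \<sigma> \<circ> g" and v: "v \<in> minus_space \<sigma>"
  have "\<sigma> (g v) = g (\<sigma> v)" using c by (metis comp_apply)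
  also have "\<dots> = - g v" using v linear_neg[OF l] by (simp add: minus_space_def)
  finally show ?thesis by (simp add: minus_space_def)
qed
lemma comm_plus: "g \<circ> \<sigma> = \<sigma> \<circ> g \<Longrightarrow> v \<in> plus_space \<sigma> \<Longrightarrow> g v \<in> plus_space \<sigma>"
proof -
  assume c: "g \<circ> \<sigma> = \<sigma> \<circ> g" and v: "v \<in> plus_space \<sigma>"
  have "\<sigma> (g v) = g (\<sigma> v)" using c by (metis comp_apply)
  also have "\<dots> = g v" using v by (simp add: plus_space_def)
  finally show ?thesis by (simp add: plus_space_def)
qed

lemma minus_sum: "(\<And>n. f n \<in> minus_space \<sigma>) \<Longrightarrow> (\<Sum>n<N. f n) \<in> minus_space \<sigma>"
  by (simp add: minus_space_def linear_sum[OF slin] sum_negf)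
lemma plus_sum: "(\<And>n. f n \<in> plus_space \<sigma>) \<Longrightarrow> (\<Sum>n<N. f n) \<in> plus_space \<sigma>"
  by (simp add: plus_space_def linear_sum[OF slin])

lemma cent_sub:
  assumes finG: "finite (refl_group R)"
    and spec: "\<forall>a\<in>R.
        proportional_to_root (R \<inter> minus_space \<sigma> \<union> R \<inter> plus_space \<sigma>)
          (orth_proj (minus_space \<sigma>) a) \<or>
        proportional_to_root (R \<inter> minus_space \<sigma> \<union> R \<inter> plus_space \<sigma>)
          (orth_proj (plus_space \<sigma>) a)"
    and gG: "g \<in> refl_group R" and gc: "g \<circ> \<sigma> = \<sigma> \<circ> g"
  shows "g \<in> set_prod (refl_group (R \<inter> minus_space \<sigma>)) (refl_group (R \<inter> plus_space \<sigma>))"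
proof -
  let ?G = "refl_group R"
  let ?R1 = "R \<inter> minus_space \<sigma>"
  let ?R2 = "R \<inter> plus_space \<sigma>"
  let ?G1 = "refl_group ?R1"
  let ?G2 = "refl_group ?R2"
  have G1G: "h \<in> ?G" if "h \<in> ?G1" for h using refl_group_mono[OF _ that] by blast
  have G2G: "h \<in> ?G" if "h \<in> ?G2" for h using refl_group_mono[OF _ that] by blast
  have finG1: "finite ?G1" using finG G1G by (meson finite_subset subsetI)
  have finG2: "finite ?G2" using finG G2G by (meson finite_subset subsetI)
  have idG1: "id \<in> ?G1" by (simp add: refl_group_def gen_group.gen_id)
  have idG2: "id \<in> ?G2" by (simp add: refl_group_def gen_group.gen_id)
  have finR: "finite R" and R0: "0 \<notin> R" using rs by (auto simp: root_system_def)
  obtain x0 where x0: "\<forall>a\<in>R. a \<bullet> x0 \<noteq> 0" using regular_exists[OF finR R0] by blast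
  define x1 where "x1 = x0 - \<sigma> x0"
  define x2 where "x2 = x0 + \<sigma> x0"
  have x1m: "x1 \<in> minus_space \<sigma>" by (simp add: x1_def minus_space_def linear_diff[OF slin] ss)
  have x2p: "x2 \<in> plus_space \<sigma>" by (simp add: x2_def plus_space_def linear_add[OF slin] ss add.commute)
  have x1r: "b \<bullet> x1 \<noteq> 0" if "b \<in> ?R1" for b
  proof -
    have "\<sigma> b \<bullet> \<sigma> (\<sigma> x0) = b \<bullet> \<sigma> x0" by (rule sinner)
    then have "b \<bullet> \<sigma> x0 = - (b \<bullet> x0)" using that by (simp add: minus_space_def ss)
    then have "b \<bullet> x1 = 2 * (b \<bullet> x0)" by (simp add: x1_def inner_diff_right)
    then show ?thesis using x0 that by simp
  qed
  have x2r: "b \<bullet> x2 \<noteq> 0" if "b \<in> ?R2" for b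
  proof -
    have "\<sigma> b \<bullet> \<sigma> (\<sigma> x0) = b \<bullet> \<sigma> x0" by (rule sinner)
    then have "b \<bullet> \<sigma> x0 = b \<bullet> x0" using that by (simp add: plus_space_def ss)
    then have "b \<bullet> x2 = 2 * (b \<bullet> x0)" by (simp add: x2_def inner_add_right)
    then show ?thesis using x0 that by simp
  qed
  obtain h1 where h1: "h1 \<in> ?G1" "\<forall>h\<in>?G1. h (g x1) \<bullet> x1 \<le> h1 (g x1) \<bullet> x1"
    using fin_max[OF finG1, of "\<lambda>h. h (g x1) \<bullet> x1"] idG1 by blast
  obtain h2 where h2: "h2 \<in> ?G2" "\<forall>h\<in>?G2. h (h1 (g x2)) \<bullet> x2 \<le> h2 (h1 (g x2)) \<bullet> x2"
    using fin_max[OF finG2, of "\<lambda>h. h (h1 (g x2)) \<bullet> x2"] idG2 by blast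
  define k where "k = h2 \<circ> h1 \<circ> g"
  have kG: "k \<in> ?G" unfolding k_def using G1G G2G h1(1) h2(1) gG by (intro refl_group_comp)
  have ko: "orthm k" by (rule refl_group_orthm[OF kG])
  have kl: "linear k" and ki: "inj k" using ko orthm_inj by (auto simp: orthm_def)
  have h1c: "h1 \<circ> \<sigma> = \<sigma> \<circ> h1" by (rule G1_comm[OF h1(1)])
  have h2c: "h2 \<circ> \<sigma> = \<sigma> \<circ> h2" by (rule G2_comm[OF h2(1)])
  have kc: "k \<circ> \<sigma> = \<sigma> \<circ> k" unfolding k_def
    by (metis (no_types, lifting) comp_assoc gc h1c h2c)
  have h1l: "linear h1" using refl_group_orthm[OF G1G[OF h1(1)]] by (simp add: orthm_def)
  have gl: "linear g" using refl_group_orthm[OF gG] by (simp add: orthm_def)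
  have u1m: "h1 (g x1) \<in> minus_space \<sigma>"
    by (rule comm_minus[OF h1l h1c]) (rule comm_minus[OF gl gc x1m])
  have kx1: "k x1 = h1 (g x1)" unfolding k_def using G2_fix[OF h2(1) u1m] by simp
  have ws1: "\<forall>b\<in>?R1. (b \<bullet> k x1) * (b \<bullet> x1) \<ge> 0"
  proof
    fix b assume b: "b \<in> ?R1"
    have "refl b \<circ> h1 \<in> ?G1" using b h1(1) by (intro refl_group_comp refl_in_group)
    then have "refl b (h1 (g x1)) \<bullet> x1 \<le> h1 (g x1) \<bullet> x1" using h1(2) by force
    moreover have "b \<noteq> 0" using b R0 by auto
    ultimately show "(b \<bullet> k x1) * (b \<bullet> x1) \<ge> 0" unfolding kx1 by (rule max_sign)
  qed
  have ws2: "\<forall>b\<in>?R2. (b \<bullet> k x2) * (b \<bullet> x2) \<ge> 0"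
  proof
    fix b assume b: "b \<in> ?R2"
    have "refl b \<circ> h2 \<in> ?G2" using b h2(1) by (intro refl_group_comp refl_in_group)
    then have "refl b (h2 (h1 (g x2))) \<bullet> x2 \<le> h2 (h1 (g x2)) \<bullet> x2" using h2(2) by force
    moreover have "b \<noteq> 0" using b R0 by auto
    ultimately show "(b \<bullet> k x2) * (b \<bullet> x2) \<ge> 0" unfolding k_def comp_apply by (rule max_sign)
  qed
  have kR: "k ` R = R" by (rule refl_group_perm[OF rs kG])
  have perm1: "\<forall>b\<in>?R1. \<exists>b'\<in>?R1. k b' = b"
  proof
    fix b assume b: "b \<in> ?R1"
    then have "\<sigma> b = (-1) *\<^sub>R b" by (simp add: minus_space_def)
    from perm_sub[OF kR ki kl kc _ this] b obtain b' where "b' \<in> R" "\<sigma> b' = (-1) *\<^sub>R b'" "k b' = b" by blast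
    then show "\<exists>b'\<in>?R1. k b' = b" by (auto simp: minus_space_def)
  qed
  have perm2: "\<forall>b\<in>?R2. \<exists>b'\<in>?R2. k b' = b"
  proof
    fix b assume b: "b \<in> ?R2"
    then have "\<sigma> b = 1 *\<^sub>R b" by (simp add: plus_space_def)
    from perm_sub[OF kR ki kl kc _ this] b obtain b' where "b' \<in> R" "\<sigma> b' = 1 *\<^sub>R b'" "k b' = b" by blast
    then show "\<exists>b'\<in>?R2. k b' = b" by (auto simp: plus_space_def)
  qed
  obtain N where N: "N > 0" "k ^^ N = id"
    using finite_order[OF finG _ _ ki] refl_group_comp[OF kG] by (auto simp: refl_group_def gen_group.gen_id)
  define y1 where "y1 = (\<Sum>n<N. (k ^^ n) x1)"
  define y2 where "y2 = (\<Sum>n<N. (k ^^ n) x2)"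
  have ky1: "k y1 = y1" unfolding y1_def by (rule sum_fixed[OF kl N(2)])
  have ky2: "k y2 = y2" unfolding y2_def by (rule sum_fixed[OF kl N(2)])
  have sp1: "\<forall>b\<in>?R1. (b \<bullet> (k ^^ n) x1) * (b \<bullet> x1) > 0" for n
    by (rule sign_pow[OF ko perm1 _ ws1]) (use x1r in blast)
  have sp2: "\<forall>b\<in>?R2. (b \<bullet> (k ^^ n) x2) * (b \<bullet> x2) > 0" for n
    by (rule sign_pow[OF ko perm2 _ ws2]) (use x2r in blast)
  have y1r: "b \<bullet> y1 \<noteq> 0" if "b \<in> ?R1" for b
    unfolding y1_def using sum_sign[OF N(1)] sp1 that by blast
  have y2r: "b \<bullet> y2 \<noteq> 0" if "b \<in> ?R2" for b
    unfolding y2_def using sum_sign[OF N(1)] sp2 that by blast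
  have kn1: "(k ^^ n) x1 \<in> minus_space \<sigma>" for n
    by (induction n) (simp_all add: x1m comm_minus[OF kl kc])
  have kn2: "(k ^^ n) x2 \<in> plus_space \<sigma>" for n
    by (induction n) (simp_all add: x2p comm_plus[OF kc])
  have y1m: "y1 \<in> minus_space \<sigma>" unfolding y1_def by (rule minus_sum[OF kn1])
  have y2p: "y2 \<in> plus_space \<sigma>" unfolding y2_def by (rule plus_sum[OF kn2])
  have either: "a \<bullet> y1 \<noteq> 0 \<or> a \<bullet> y2 \<noteq> 0" if a: "a \<in> R" for a
  proof -
    define p1 where "p1 = (1/2) *\<^sub>R (a - \<sigma> a)"
    define p2 where "p2 = (1/2) *\<^sub>R (a + \<sigma> a)"
    have p1m: "p1 \<in> minus_space \<sigma>" unfolding p1_def by (rule p1_in)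
    have p2p: "p2 \<in> plus_space \<sigma>" unfolding p2_def by (rule p2_in)
    have asp: "a = p1 + p2" unfolding p1_def p2_def by (rule a_split)
    have "p2 \<bullet> y1 = 0" using perp[of y1 p2] y1m p2p by (simp add: minus_space_def plus_space_def inner_commute)
    then have ay1: "a \<bullet> y1 = p1 \<bullet> y1" using asp by (simp add: inner_add_left)
    have "p1 \<bullet> y2 = 0" using perp[of p1 y2] p1m y2p by (simp add: minus_space_def plus_space_def)
    then have ay2: "a \<bullet> y2 = p2 \<bullet> y2" using asp by (simp add: inner_add_left)
    have both0: "v = 0" if "v \<in> minus_space \<sigma>" "v \<in> plus_space \<sigma>" for v
    proof -
      have "- v = v" using that by (simp add: minus_space_def plus_space_def)
      then have "v + v = 0" by (metis add.right_inverse)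
      then have "2 *\<^sub>R v = 0" by (simp add: scaleR_2)
      then show ?thesis by simp
    qed
    from spec a have "proportional_to_root (?R1 \<union> ?R2) p1 \<or> proportional_to_root (?R1 \<union> ?R2) p2"
      by (simp add: proj1 proj2 p1_def p2_def)
    then show ?thesis
    proof
      assume "proportional_to_root (?R1 \<union> ?R2) p1"
      then obtain b c where bc: "b \<in> ?R1 \<union> ?R2" "p1 = c *\<^sub>R b" by (auto simp: proportional_to_root_def)
      show ?thesis
      proof (cases "p1 = 0")
        case True
        then have "a \<in> ?R2" using asp p2p a by simp
        then show ?thesis using y2r by blast
      next
        case False
        then have c0: "c \<noteq> 0" using bc by auto
        show ?thesis
        proof (cases "b \<in> ?R1")
          case True
          then have "p1 \<bullet> y1 \<noteq> 0" using bc c0 y1r by simp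
          then show ?thesis using ay1 by simp
        next
          case False
          then have "b \<in> plus_space \<sigma>" using bc by auto
          then have "p1 \<in> plus_space \<sigma>" using bc linear_scale[OF slin] by (simp add: plus_space_def)
          then have "p1 = 0" using both0 p1m by blast
          then show ?thesis using \<open>p1 \<noteq> 0\<close> by simp
        qed
      qed
    next
      assume "proportional_to_root (?R1 \<union> ?R2) p2"
      then obtain b c where bc: "b \<in> ?R1 \<union> ?R2" "p2 = c *\<^sub>R b" by (auto simp: proportional_to_root_def)
      show ?thesis
      proof (cases "p2 = 0")
        case True
        then have "a \<in> ?R1" using asp p1m a by simp
        then show ?thesis using y1r by blast
      next
        case False
        then have c0: "c \<noteq> 0" using bc by auto
        show ?thesis
        proof (cases "b \<in> ?R2")
          case True
          then have "p2 \<bullet> y2 \<noteq> 0" using bc c0 y2r by simp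
          then show ?thesis using ay2 by simp
        next
          case False
          then have "b \<in> minus_space \<sigma>" using bc by auto
          then have "p2 \<in> minus_space \<sigma>" using bc linear_scale[OF slin] by (simp add: minus_space_def)
          then have "p2 = 0" using both0 p2p by blast
          then show ?thesis using \<open>p2 \<noteq> 0\<close> by simp
        qed
      qed
    qed
  qed
  define F where "F = (\<lambda>a. - (a \<bullet> y1) / (a \<bullet> y2)) ` R"
  have "finite F" using finR by (simp add: F_def)
  then obtain t :: real where t: "t \<notin> F" using ex_new_if_finite[OF infinite_UNIV_char_0] by blast
  define z where "z = y1 + t *\<^sub>R y2"
  have reg: "\<forall>a\<in>R. a \<bullet> z \<noteq> 0"
  proof
    fix a assume a: "a \<in> R"
    show "a \<bullet> z \<noteq> 0"
    proof
      assume "a \<bullet> z = 0"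
      then have h: "a \<bullet> y1 + t * (a \<bullet> y2) = 0" by (simp add: z_def inner_add_right)
      show False
      proof (cases "a \<bullet> y2 = 0")
        case True then show False using h either[OF a] by simp
      next
        case False
        then have "t = - (a \<bullet> y1) / (a \<bullet> y2)" using h by (simp add: field_simps)
        then show False using t a by (simp add: F_def)
      qed
    qed
  qed
  have kz: "k z = z" by (simp add: z_def linear_add[OF kl] linear_scale[OF kl] ky1 ky2)
  have kid: "k = id" by (rule key_lemma[OF rs reg kG kz])
  obtain h1' where h1': "h1' \<in> ?G1" "h1' \<circ> h1 = id" using refl_group_inv[OF h1(1)] by blast
  obtain h2' where h2': "h2' \<in> ?G2" "h2' \<circ> h2 = id" using refl_group_inv[OF h2(1)] by blast
  have "h1' \<circ> h2' \<circ> k = g"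
  proof -
    have "h1' \<circ> h2' \<circ> k = h1' \<circ> (h2' \<circ> h2) \<circ> h1 \<circ> g" by (simp add: k_def comp_assoc)
    also have "\<dots> = (h1' \<circ> h1) \<circ> g" using h2'(2) by (simp add: comp_assoc)
    also have "\<dots> = g" using h1'(2) by simp
    finally show ?thesis .
  qed
  then have "g = h1' \<circ> h2'" using kid by simp
  then show ?thesis using h1'(1) h2'(1) by (auto simp: set_prod_def)
qed

end


theorem proposition10:
  fixes R :: "'a::euclidean_space set" and \<sigma> :: "'a \<Rightarrow> 'a"
  assumes "root_system R"
    and "finite (refl_group R)"
    and "special_involution R \<sigma>"
  shows "centraliser (refl_group R) \<sigma> =
           set_prod (refl_group (R \<inter> minus_space \<sigma>)) (refl_group (R \<inter> plus_space \<sigma>))"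
proof -
  have rs: "root_system R" and finG: "finite (refl_group R)" using assms(1,2) .
  have sG: "\<sigma> \<in> refl_group R" and inv: "\<sigma> \<circ> \<sigma> = id"
    and spec: "\<forall>a\<in>R.
        proportional_to_root (R \<inter> minus_space \<sigma> \<union> R \<inter> plus_space \<sigma>)
          (orth_proj (minus_space \<sigma>) a) \<or>
        proportional_to_root (R \<inter> minus_space \<sigma> \<union> R \<inter> plus_space \<sigma>)
          (orth_proj (plus_space \<sigma>) a)"
    using assms(3) by (auto simp: special_involution_def)
  show ?thesis
  proof
    show "centraliser (refl_group R) \<sigma> \<subseteq>
           set_prod (refl_group (R \<inter> minus_space \<sigma>)) (refl_group (R \<inter> plus_space \<sigma>))"
      using cent_sub[OF rs sG inv finG spec] by (auto simp: centraliser_def)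
  next
    show "set_prod (refl_group (R \<inter> minus_space \<sigma>)) (refl_group (R \<inter> plus_space \<sigma>))
          \<subseteq> centraliser (refl_group R) \<sigma>"
    proof
      fix g assume "g \<in> set_prod (refl_group (R \<inter> minus_space \<sigma>)) (refl_group (R \<inter> plus_space \<sigma>))"
      then obtain g1 g2 where g: "g = g1 \<circ> g2" "g1 \<in> refl_group (R \<inter> minus_space \<sigma>)"
        "g2 \<in> refl_group (R \<inter> plus_space \<sigma>)" by (auto simp: set_prod_def)
      have "g1 \<in> refl_group R" using refl_group_mono[OF _ g(2)] by blast
      moreover have "g2 \<in> refl_group R" using refl_group_mono[OF _ g(3)] by blast
      ultimately have gG: "g \<in> refl_group R" using g(1) refl_group_comp by blast
      have c1: "g1 \<circ> \<sigma> = \<sigma> \<circ> g1" by (rule G1_comm[OF rs sG inv g(2)])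
      have c2: "g2 \<circ> \<sigma> = \<sigma> \<circ> g2" by (rule G2_comm[OF rs sG inv g(3)])
      have "g \<circ> \<sigma> = \<sigma> \<circ> g" unfolding g(1) by (metis c1 c2 comp_assoc)
      then show "g \<in> centraliser (refl_group R) \<sigma>" using gG by (simp add: centraliser_def)
    qed
  qed
qed

end
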